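(* Let $X$ be a finite poset. If $X$ is homologically admissible, then $X$ is two-wide.
   Context: A finite poset $(X,\le)$ is regarded as a finite $T_0$ topological space whose open sets are the down-sets; homology means singular homology of this space. Write $y\prec x$ if $y<x$ and there is no $z$ with $y<z<x$; the Hasse diagram $\mathcal H(X)$ has edges $(w,x)$ with $w\prec x$. Let $\widehat U_x=\{w\in X: w<x\}$. A space is acyclic if it is nonempty and all its reduced homology groups vanish. An edge $(w,x)$ of $\mathcal H(X)$ is homologically admissible if $\widehat U_x-\{w\}$ is acyclic; $X$ is homologically admissible if all its edges are. A poset $X$ is two-wide if for any $x,z,y\in X$ with $x\prec z\prec y$ there exists $z'\in X$, $z'\neq z$, with $x\prec z'\prec y$. *)

theory Defs
  imports "HOL-Homology.Homology"
begin

definition finite_poset :: "'a set \<Rightarrow> ('a \<Rightarrow> 'a \<Rightarrow> bool) \<Rightarrow> bool" where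
  "finite_poset X leq \<equiv> finite X \<and> (\<forall>x\<in>X. leq x x)
     \<and> (\<forall>x\<in>X. \<forall>y\<in>X. leq x y \<and> leq y x \<longrightarrow> x = y)
     \<and> (\<forall>x\<in>X. \<forall>y\<in>X. \<forall>z\<in>X. leq x y \<and> leq y z \<longrightarrow> leq x z)"

definition pstrict :: "('a \<Rightarrow> 'a \<Rightarrow> bool) \<Rightarrow> 'a \<Rightarrow> 'a \<Rightarrow> bool" where
  "pstrict leq x y \<equiv> leq x y \<and> x \<noteq> y"

definition poset_topology :: "'a set \<Rightarrow> ('a \<Rightarrow> 'a \<Rightarrow> bool) \<Rightarrow> 'a topology" where
  "poset_topology X leq = topology (\<lambda>U. U \<subseteq> X \<and> (\<forall>x\<in>U. \<forall>y\<in>X. leq y x \<longrightarrow> y \<in> U))"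

definition covers :: "'a set \<Rightarrow> ('a \<Rightarrow> 'a \<Rightarrow> bool) \<Rightarrow> 'a \<Rightarrow> 'a \<Rightarrow> bool" where
  "covers X leq y x \<equiv> y \<in> X \<and> x \<in> X \<and> pstrict leq y x
     \<and> \<not> (\<exists>z\<in>X. pstrict leq y z \<and> pstrict leq z x)"

definition hatU :: "'a set \<Rightarrow> ('a \<Rightarrow> 'a \<Rightarrow> bool) \<Rightarrow> 'a \<Rightarrow> 'a set" where
  "hatU X leq x = {w \<in> X. pstrict leq w x}"

definition acyclic_space :: "'a topology \<Rightarrow> bool" where
  "acyclic_space T \<equiv> topspace T \<noteq> {} \<and> (\<forall>p::int. trivial_group (reduced_homology_group p T))"

definition homologically_admissible_edge ::
    "'a set \<Rightarrow> ('a \<Rightarrow> 'a \<Rightarrow> bool) \<Rightarrow> 'a \<Rightarrow> 'a \<Rightarrow> bool" where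
  "homologically_admissible_edge X leq w x \<equiv>
     acyclic_space (subtopology (poset_topology X leq) (hatU X leq x - {w}))"

definition homologically_admissible :: "'a set \<Rightarrow> ('a \<Rightarrow> 'a \<Rightarrow> bool) \<Rightarrow> bool" where
  "homologically_admissible X leq \<equiv>
     \<forall>w x. covers X leq w x \<longrightarrow> homologically_admissible_edge X leq w x"

definition two_wide :: "'a set \<Rightarrow> ('a \<Rightarrow> 'a \<Rightarrow> bool) \<Rightarrow> bool" where
  "two_wide X leq \<equiv> \<forall>x\<in>X. \<forall>z\<in>X. \<forall>y\<in>X. covers X leq x z \<and> covers X leq z y \<longrightarrow>
     (\<exists>z'\<in>X. z' \<noteq> z \<and> covers X leq x z' \<and> covers X leq z' y)"

lemma istopology_poset:
  "istopology (\<lambda>U. U \<subseteq> X \<and> (\<forall>x\<in>U. \<forall>y\<in>X. leq y x \<longrightarrow> y \<in> U))"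
  unfolding istopology_def by blast

lemma openin_poset_topology:
  "openin (poset_topology X leq) U \<longleftrightarrow> U \<subseteq> X \<and> (\<forall>x\<in>U. \<forall>y\<in>X. leq y x \<longrightarrow> y \<in> U)"
  unfolding poset_topology_def using istopology_poset[of X leq] by simp

end

theory Submission imports Defs begin

locale fposet =
  fixes X :: "'a set" and leq :: "'a \<Rightarrow> 'a \<Rightarrow> bool"
  assumes fp: "finite_poset X leq"
begin

definition down :: "'a set \<Rightarrow> bool" where
  "down S \<longleftrightarrow> S \<subseteq> X \<and> (\<forall>x\<in>S. \<forall>y\<in>X. leq y x \<longrightarrow> y \<in> S)"

abbreviation "T \<equiv> poset_topology X leq"
abbreviation "sub S \<equiv> subtopology T S"

lemma finX: "finite X" and refl: "x \<in> X \<Longrightarrow> leq x x"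
  and antisym: "x \<in> X \<Longrightarrow> y \<in> X \<Longrightarrow> leq x y \<Longrightarrow> leq y x \<Longrightarrow> x = y"
  and trans: "x \<in> X \<Longrightarrow> y \<in> X \<Longrightarrow> z \<in> X \<Longrightarrow> leq x y \<Longrightarrow> leq y z \<Longrightarrow> leq x z"
  using fp unfolding finite_poset_def by blast+

lemma openT: "openin T S \<longleftrightarrow> down S"
  by (simp add: openin_poset_topology down_def)

lemma topT: "topspace T = X"
proof -
  have "openin T X" by (simp add: openT down_def)
  then have "X \<subseteq> topspace T" by (simp add: openin_subset)
  moreover have "topspace T \<subseteq> X" using openT[of "topspace T"] by (simp add: down_def)
  ultimately show ?thesis by blast
qed

declare topT[simp]

lemma top_sub: "S \<subseteq> X \<Longrightarrow> topspace (sub S) = S"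
  by (simp add: topT inf.absorb2)

lemma open_sub: assumes "down S" shows "openin (sub S) W \<longleftrightarrow> down W \<and> W \<subseteq> S"
proof
  assume "openin (sub S) W"
  then obtain V where "openin T V" "W = S \<inter> V" by (auto simp: openin_subtopology)
  then show "down W \<and> W \<subseteq> S" using assms by (auto simp: openT down_def)
next
  assume "down W \<and> W \<subseteq> S"
  then show "openin (sub S) W"
    by (metis inf.absorb_iff2 openT openin_subtopology_Int2 inf_commute)
qed

definition U :: "'a \<Rightarrow> 'a set" where "U v = {u\<in>X. leq u v}"

lemma down_U: "v \<in> X \<Longrightarrow> down (U v)"
  unfolding down_def U_def using trans by blast

lemma contr_U: assumes v: "v \<in> X" shows "contractible_space (sub (U v))"
  unfolding contractible_space_def homotopic_with_def
proof (intro exI conjI)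
  let ?h = "\<lambda>(t::real,u). if t < 1 then u else v"
  have UX: "U v \<subseteq> X" by (auto simp: U_def)
  show "continuous_map (prod_topology (top_of_set {0..1}) (sub (U v))) (sub (U v)) ?h"
    unfolding continuous_map_def
  proof (intro conjI allI impI)
    show "?h \<in> topspace (prod_topology (top_of_set {0..1::real}) (sub (U v))) \<rightarrow> topspace (sub (U v))"
      using v UX by (auto simp: top_sub U_def refl topT)
  next
    fix W assume W: "openin (sub (U v)) W"
    then have dW: "down W" "W \<subseteq> U v" using open_sub down_U v by blast+
    show "openin (prod_topology (top_of_set {0..1::real}) (sub (U v)))
      {x \<in> topspace (prod_topology (top_of_set {0..1}) (sub (U v))). ?h x \<in> W}"
    proof (cases "v \<in> W")
      case True
      then have "W = U v" using dW by (auto simp: down_def U_def)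
      then have "{x \<in> topspace (prod_topology (top_of_set {0..1::real}) (sub (U v))). ?h x \<in> W}
          = topspace (prod_topology (top_of_set {0..1::real}) (sub (U v)))"
        using True UX by (auto simp: top_sub)
      then show ?thesis by (metis openin_topspace)
    next
      case False
      have "{x \<in> topspace (prod_topology (top_of_set {0..1::real}) (sub (U v))). ?h x \<in> W}
          = ({0..1} \<inter> {..<1}) \<times> W"
        using False UX dW by (auto simp: top_sub topT split: if_splits)
      moreover have "openin (top_of_set {0..1::real}) ({0..1} \<inter> {..<1})"
        by (simp add: openin_open_Int)
      ultimately show ?thesis using W by (simp add: openin_prod_Times_iff)
    qed
  qed
  show "\<forall>x. ?h (0, x) = id x" by simp
  show "\<forall>x. ?h (1, x) = v" by simp
qed simp


lemma exact_triv:
  assumes "exact_seq ([G1,G2,G3],[f,g])" "trivial_group G1" "trivial_group G3"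
  shows "trivial_group G2"
proof -
  have e: "group G1" "f \<in> hom G2 G1" "kernel G2 G1 f = g ` carrier G3" "group_hom G3 G2 g"
    using assms(1) by (simp_all add: exact_seq_cons_iff)
  have "kernel G2 G1 f = carrier G2"
    using e(2) assms(2) unfolding kernel_def trivial_group_def by (auto dest: hom_in_carrier)
  moreover have "g ` carrier G3 = {one G2}"
    using assms(3) e(4) unfolding trivial_group_def by (simp add: group_hom.hom_one)
  ultimately show ?thesis using e(3,4) unfolding trivial_group_def group_hom_def group_hom_axioms_def by simp
qed

lemma sub_sub: "A \<subseteq> S \<Longrightarrow> subtopology (sub S) A = sub A"
  by (simp add: subtopology_subtopology inf.absorb2)

lemma tr1:
  assumes "A \<noteq> {}" "A \<subseteq> S" "S \<subseteq> X"
    "trivial_group (reduced_homology_group p (sub S))"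
    "trivial_group (reduced_homology_group (p-1) (sub A))"
  shows "trivial_group (relative_homology_group p (sub S) A)"
proof -
  have "topspace (sub S) \<inter> A \<noteq> {}" using assms by (simp add: top_sub inf.absorb2)
  from homology_exactness_reduced_1[OF this, of p]
  have "exact_seq ([reduced_homology_group (p - 1) (sub A), relative_homology_group p (sub S) A,
          reduced_homology_group p (sub S)],
         [hom_boundary p (sub S) A, hom_induced p (sub S) {} (sub S) A id])"
    using sub_sub[OF assms(2)] by simp
  then show ?thesis using assms(5,4) by (rule exact_triv)
qed

lemma tr2:
  assumes "A \<subseteq> S"
    "trivial_group (reduced_homology_group (p-1) (sub S))"
    "trivial_group (relative_homology_group p (sub S) A)"
  shows "trivial_group (reduced_homology_group (p-1) (sub A))"
proof -
  have "exact_seq ([reduced_homology_group (p - 1) (sub S), reduced_homology_group (p - 1) (sub A),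
         relative_homology_group p (sub S) A],
         [hom_induced (p - 1) (sub A) {} (sub S) {} id, hom_boundary p (sub S) A])"
    using homology_exactness_reduced_2[of p "sub S" A] sub_sub[OF assms(1)] by simp
  then show ?thesis using assms(2,3) by (rule exact_triv)
qed

lemma tr3:
  assumes "A \<subseteq> S"
    "trivial_group (relative_homology_group p (sub S) A)"
    "trivial_group (reduced_homology_group p (sub A))"
  shows "trivial_group (reduced_homology_group p (sub S))"
proof -
  have "exact_seq ([relative_homology_group p (sub S) A, reduced_homology_group p (sub S),
         reduced_homology_group p (sub A)],
         [hom_induced p (sub S) {} (sub S) A id, hom_induced p (sub A) {} (sub S) {} id])"
    using homology_exactness_reduced_3[of p "sub S" A] sub_sub[OF assms(1)] by simp
  then show ?thesis using assms(2,3) by (rule exact_triv)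
qed

lemma exc:
  assumes "down S" "down A" "down C" "A \<subseteq> S" "C \<subseteq> S" "A \<union> C = S"
  shows "relative_homology_group p (sub C) (A \<inter> C) \<cong> relative_homology_group p (sub S) A"
proof -
  have SX: "S \<subseteq> X" using assms by (simp add: down_def)
  have "topspace (sub S) - (S - C) = C" using assms SX by (auto simp: top_sub)
  then have cl: "closedin (sub S) (S - C)"
    unfolding closedin_def using assms SX by (auto simp: top_sub open_sub)
  have op: "openin (sub S) A" using assms by (simp add: open_sub)
  have "(sub S) closure_of (S - C) \<subseteq> (sub S) interior_of A"
    using cl op assms by (auto simp: closure_of_closedin interior_of_openin)
  from homology_excision_axiom[OF this assms(4), of p]
  have "hom_induced p (subtopology (sub S) (S - (S - C))) (A - (S - C)) (subtopology (sub S) S) A id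
    \<in> iso (relative_homology_group p (subtopology (sub S) (S - (S - C))) (A - (S - C)))
          (relative_homology_group p (subtopology (sub S) S) A)" .
  moreover have "S - (S - C) = C" "A - (S - C) = A \<inter> C" using assms by auto
  ultimately have "hom_induced p (sub C) (A \<inter> C) (sub S) A id
    \<in> iso (relative_homology_group p (sub C) (A \<inter> C)) (relative_homology_group p (sub S) A)"
    using sub_sub[OF assms(5)] sub_sub[of S S] by simp
  then show ?thesis by (rule is_isoI)
qed


lemma v_U: "v \<in> X \<Longrightarrow> v \<in> U v" by (simp add: U_def refl)
lemma U_X: "U v \<subseteq> X" by (auto simp: U_def)

lemma K:
  assumes "down S" "down A" "v \<in> X" "U v \<subseteq> S" "A \<subseteq> S" "A \<union> U v = S" "A \<inter> U v \<noteq> {}"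
  shows "trivial_group (relative_homology_group p (sub S) A) \<longleftrightarrow>
         trivial_group (reduced_homology_group (p-1) (sub (A \<inter> U v)))"
proof -
  have i1: "relative_homology_group p (sub (U v)) (A \<inter> U v) \<cong> relative_homology_group p (sub S) A"
    by (rule exc[OF assms(1,2) down_U[OF assms(3)] assms(5,4,6)])
  have "topspace (sub (U v)) \<inter> (A \<inter> U v) \<noteq> {}" unfolding top_sub[OF U_X] using assms(7) by blast
  from iso_relative_homology_of_contractible[OF contr_U[OF assms(3)] this, of p]
  have "relative_homology_group p (sub (U v)) (A \<inter> U v) \<cong> reduced_homology_group (p - 1) (sub (A \<inter> U v))"
    using sub_sub[of "A \<inter> U v" "U v"] by (auto intro: is_isoI)
  then have "trivial_group (relative_homology_group p (sub (U v)) (A \<inter> U v)) \<longleftrightarrow> trivial_group (reduced_homology_group (p - 1) (sub (A \<inter> U v)))"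
    by (rule isomorphic_group_triviality) simp_all
  moreover have "trivial_group (relative_homology_group p (sub (U v)) (A \<inter> U v)) \<longleftrightarrow> trivial_group (relative_homology_group p (sub S) A)"
    using i1 by (rule isomorphic_group_triviality) simp_all
  ultimately show ?thesis by simp
qed

lemma K0:
  assumes "down S" "down A" "v \<in> X" "U v \<subseteq> S" "A \<subseteq> S" "A \<union> U v = S" "A \<inter> U v = {}"
  shows "\<not> trivial_group (relative_homology_group 0 (sub S) A)"
proof
  assume tr: "trivial_group (relative_homology_group 0 (sub S) A)"
  have i1: "homology_group 0 (sub (U v)) \<cong> relative_homology_group 0 (sub S) A"
    using exc[OF assms(1,2) down_U[OF assms(3)] assms(5,4,6), of 0] assms(7) by simp
  have "path_connected_space (sub (U v))"
    by (rule contractible_imp_path_connected_space[OF contr_U[OF assms(3)]])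
  moreover have "topspace (sub (U v)) \<noteq> {}" using assms U_X v_U by (auto simp: top_sub)
  ultimately have i2: "homology_group 0 (sub (U v)) \<cong> integer_group"
    by (rule isomorphic_integer_zeroth_homology_group)
  have t: "trivial_group (homology_group 0 (sub (U v)))"
    using isomorphic_group_triviality[OF i1] tr by simp
  have "trivial_group integer_group"
    by (rule isomorphic_group_triviality1[OF i2 group_integer_group t])
  then show False unfolding trivial_group_def by (simp add: set_eq_iff) (metis zero_neq_one)
qed

lemma K1:
  assumes "down S" "down A" "v \<in> X" "U v \<subseteq> S" "A \<subseteq> S" "A \<union> U v = S" "A \<inter> U v = {}"
    "U v = {v}" "p \<noteq> 0"
  shows "trivial_group (relative_homology_group p (sub S) A)"
proof -
  have i1: "homology_group p (sub (U v)) \<cong> relative_homology_group p (sub S) A"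
    using exc[OF assms(1,2) down_U[OF assms(3)] assms(5,4,6), of p] assms(7) by simp
  have "trivial_group (homology_group p (sub (U v)))"
    using assms by (intro homology_dimension_axiom) (auto simp: top_sub)
  then show ?thesis
    using isomorphic_group_triviality[OF i1] by simp
qed


abbreviation "H v \<equiv> hatU X leq v"
abbreviation lt (infix "<<" 50) where "a << b \<equiv> pstrict leq a b"

lemma H_X: "H v \<subseteq> X" by (auto simp: hatU_def)

lemma lt_le_trans: "a \<in> X \<Longrightarrow> b \<in> X \<Longrightarrow> c \<in> X \<Longrightarrow> a << b \<Longrightarrow> leq b c \<Longrightarrow> a << c"
  unfolding pstrict_def using trans antisym by blast
lemma le_lt_trans: "a \<in> X \<Longrightarrow> b \<in> X \<Longrightarrow> c \<in> X \<Longrightarrow> leq a b \<Longrightarrow> b << c \<Longrightarrow> a << c"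
  unfolding pstrict_def using trans antisym by blast
lemma lt_trans: "a \<in> X \<Longrightarrow> b \<in> X \<Longrightarrow> c \<in> X \<Longrightarrow> a << b \<Longrightarrow> b << c \<Longrightarrow> a << c"
  unfolding pstrict_def using trans antisym by blast
lemma lt_irrefl: "\<not> a << a" by (simp add: pstrict_def)
lemma lt_asym: "a \<in> X \<Longrightarrow> b \<in> X \<Longrightarrow> a << b \<Longrightarrow> \<not> b << a"
  unfolding pstrict_def using antisym by blast

lemma down_H: "v \<in> X \<Longrightarrow> down (H v)"
  unfolding down_def hatU_def using le_lt_trans by blast

lemma U_eq: "v \<in> X \<Longrightarrow> U v = insert v (H v)"
  unfolding U_def hatU_def pstrict_def using refl by blast

lemma ex_max: "finite S \<Longrightarrow> S \<subseteq> X \<Longrightarrow> S \<noteq> {} \<Longrightarrow> \<exists>m\<in>S. \<forall>s\<in>S. \<not> m << s"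
proof (induction S rule: finite_induct)
  case (insert x F)
  show ?case
  proof (cases "F = {}")
    case True then show ?thesis using lt_irrefl by auto
  next
    case False
    then obtain m where m: "m \<in> F" "\<forall>s\<in>F. \<not> m << s" using insert by auto
    show ?thesis
    proof (cases "m << x")
      case True
      have "\<forall>s\<in>insert x F. \<not> x << s"
        using True m insert.prems lt_trans lt_irrefl by blast
      then show ?thesis by blast
    next
      case False then show ?thesis using m by blast
    qed
  qed
qed simp

lemma ex_min: "finite S \<Longrightarrow> S \<subseteq> X \<Longrightarrow> S \<noteq> {} \<Longrightarrow> \<exists>m\<in>S. \<forall>s\<in>S. \<not> s << m"
proof (induction S rule: finite_induct)
  case (insert x F)
  show ?case
  proof (cases "F = {}")
    case True then show ?thesis using lt_irrefl by auto
  next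
    case False
    then obtain m where m: "m \<in> F" "\<forall>s\<in>F. \<not> s << m" using insert by auto
    show ?thesis
    proof (cases "x << m")
      case True
      have "\<forall>s\<in>insert x F. \<not> s << x"
        using True m insert.prems lt_trans lt_irrefl by blast
      then show ?thesis by blast
    next
      case False then show ?thesis using m by blast
    qed
  qed
qed simp

lemma card_H_less:
  assumes a: "u \<in> X" "v \<in> X" "u << v" shows "card (H u) < card (H v)"
proof (rule psubset_card_mono)
  show "finite (H v)" using finX H_X finite_subset by blast
  have "H u \<subseteq> H v"
  proof
    fix t assume "t \<in> H u"
    then have "t \<in> X" "t << u" by (auto simp: hatU_def)
    then have "t << v" using lt_trans[OF _ a(1,2) _ a(3)] by blast
    then show "t \<in> H v" using \<open>t \<in> X\<close> by (simp add: hatU_def)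
  qed
  moreover have "u \<in> H v" "u \<notin> H u" using a lt_irrefl by (auto simp: hatU_def)
  ultimately show "H u \<subset> H v" by blast
qed

lemma covers_X: "covers X leq w v \<Longrightarrow> w \<in> X \<and> v \<in> X \<and> w << v"
  by (simp add: covers_def)

lemma edge_sets:
  assumes c: "covers X leq w v"
  shows "down (H v - {w})" "H v - {w} \<union> U w = H v" "(H v - {w}) \<inter> U w = H w"
    "U w \<subseteq> H v" "H v - {w} \<subseteq> H v"
proof -
  have w: "w \<in> X" "v \<in> X" "w << v" using covers_X[OF c] by auto
  have nb: "\<And>z. z \<in> X \<Longrightarrow> w << z \<Longrightarrow> z << v \<Longrightarrow> False" using c by (auto simp: covers_def)
  show "down (H v - {w})"
    unfolding down_def
  proof (intro conjI ballI impI)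
    show "H v - {w} \<subseteq> X" using H_X by blast
    fix a y assume a: "a \<in> H v - {w}" and y: "y \<in> X" "leq y a"
    have aX: "a \<in> X" "a << v" "a \<noteq> w" using a by (auto simp: hatU_def)
    have "y << v" using le_lt_trans[OF y(1) aX(1) w(2) y(2) aX(2)] .
    moreover have "y \<noteq> w"
    proof
      assume "y = w"
      then have "w << a" using y aX by (simp add: pstrict_def)
      then show False using nb[OF aX(1) _ aX(2)] by blast
    qed
    ultimately show "y \<in> H v - {w}" using y by (simp add: hatU_def)
  qed
  show UH: "U w \<subseteq> H v"
  proof
    fix u assume "u \<in> U w"
    then have "u \<in> X" "leq u w" by (auto simp: U_def)
    then show "u \<in> H v" using le_lt_trans[OF _ w(1,2) _ w(3)] by (simp add: hatU_def)
  qed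
  have "w \<in> U w" using v_U[OF w(1)] .
  then show "H v - {w} \<union> U w = H v" using UH by blast
  show "(H v - {w}) \<inter> U w = H w"
  proof
    show "(H v - {w}) \<inter> U w \<subseteq> H w" by (auto simp: U_def hatU_def pstrict_def)
    show "H w \<subseteq> (H v - {w}) \<inter> U w"
    proof
      fix u assume "u \<in> H w"
      then have u: "u \<in> X" "u << w" by (auto simp: hatU_def)
      then have "u << v" using lt_trans[OF _ w(1,2) _ w(3)] by blast
      then show "u \<in> (H v - {w}) \<inter> U w" using u by (auto simp: hatU_def U_def pstrict_def)
    qed
  qed
  show "H v - {w} \<subseteq> H v" by blast
qed


lemma acyc_iff: "S \<subseteq> X \<Longrightarrow> acyclic_space (sub S) \<longleftrightarrow>
   S \<noteq> {} \<and> (\<forall>p. trivial_group (reduced_homology_group p (sub S)))"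
  unfolding acyclic_space_def by (simp add: Int_absorb1)

lemma edge_acyc:
  assumes adm: "homologically_admissible X leq" and c: "covers X leq w v"
  shows "H v - {w} \<noteq> {}" "\<And>p. trivial_group (reduced_homology_group p (sub (H v - {w})))"
proof -
  have "acyclic_space (sub (H v - {w}))"
    using adm c unfolding homologically_admissible_def homologically_admissible_edge_def by blast
  moreover have "H v - {w} \<subseteq> X" using H_X by blast
  ultimately show "H v - {w} \<noteq> {}" "\<And>p. trivial_group (reduced_homology_group p (sub (H v - {w})))"
    using acyc_iff by blast+
qed

lemma E_rel:
  assumes adm: "homologically_admissible X leq" and c: "covers X leq w v"
  shows "trivial_group (reduced_homology_group p (sub (H v))) \<longleftrightarrow>
         trivial_group (relative_homology_group p (sub (H v)) (H v - {w}))"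
proof
  note ea = edge_acyc[OF adm c]
  assume "trivial_group (reduced_homology_group p (sub (H v)))"
  then show "trivial_group (relative_homology_group p (sub (H v)) (H v - {w}))"
    using tr1[OF ea(1) edge_sets(5)[OF c] H_X] ea(2) by blast
next
  note ea = edge_acyc[OF adm c]
  assume "trivial_group (relative_homology_group p (sub (H v)) (H v - {w}))"
  then show "trivial_group (reduced_homology_group p (sub (H v)))"
    using tr3[OF edge_sets(5)[OF c]] ea(2) by blast
qed

lemma E1:
  assumes adm: "homologically_admissible X leq" and c: "covers X leq w v" and ne: "H w \<noteq> {}"
  shows "trivial_group (reduced_homology_group p (sub (H v))) \<longleftrightarrow>
         trivial_group (reduced_homology_group (p-1) (sub (H w)))"
proof -
  have w: "w \<in> X" "v \<in> X" using covers_X[OF c] by auto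
  note es = edge_sets[OF c]
  have "trivial_group (relative_homology_group p (sub (H v)) (H v - {w})) \<longleftrightarrow>
         trivial_group (reduced_homology_group (p-1) (sub ((H v - {w}) \<inter> U w)))"
    by (rule K[OF down_H[OF w(2)] es(1) w(1) es(4) es(5) es(2)]) (use es(3) ne in simp)
  then show ?thesis using E_rel[OF adm c] es(3) by simp
qed

lemma E0:
  assumes adm: "homologically_admissible X leq" and c: "covers X leq w v" and e: "H w = {}"
  shows "trivial_group (reduced_homology_group p (sub (H v))) \<longleftrightarrow> p \<noteq> 0"
proof -
  have w: "w \<in> X" "v \<in> X" using covers_X[OF c] by auto
  note es = edge_sets[OF c]
  have i: "(H v - {w}) \<inter> U w = {}" "U w = {w}" using es(3) e U_eq[OF w(1)] by auto
  show ?thesis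
  proof (cases "p = 0")
    case True
    then show ?thesis using K0[OF down_H[OF w(2)] es(1) w(1) es(4) es(5) es(2) i(1)] E_rel[OF adm c] by simp
  next
    case False
    then show ?thesis using K1[OF down_H[OF w(2)] es(1) w(1) es(4) es(5) es(2) i(1) i(2) False] E_rel[OF adm c] by simp
  qed
qed


definition deg :: "'a \<Rightarrow> int \<Rightarrow> bool" where
  "deg v n \<longleftrightarrow> (H v = {} \<and> n = -1) \<or>
     (H v \<noteq> {} \<and> (\<forall>k. \<not> trivial_group (reduced_homology_group k (sub (H v))) \<longleftrightarrow> k = n))"

lemma deg_step:
  assumes adm: "homologically_admissible X leq" and c: "covers X leq w v" and dw: "deg w m"
  shows "deg v (m+1)"
proof -
  have w: "w \<in> X" "v \<in> X" "w << v" using covers_X[OF c] by auto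
  have ne: "H v \<noteq> {}" using w by (auto simp: hatU_def)
  have "\<forall>k. \<not> trivial_group (reduced_homology_group k (sub (H v))) \<longleftrightarrow> k = m + 1"
  proof
    fix k
    show "\<not> trivial_group (reduced_homology_group k (sub (H v))) \<longleftrightarrow> k = m + 1"
    proof (cases "H w = {}")
      case True
      then have "m = -1" using dw by (simp add: deg_def)
      then show ?thesis using E0[OF adm c True, of k] by simp
    next
      case False
      then have "\<not> trivial_group (reduced_homology_group (k-1) (sub (H w))) \<longleftrightarrow> k - 1 = m"
        using dw by (simp add: deg_def)
      then show ?thesis using E1[OF adm c False, of k] by auto
    qed
  qed
  then show ?thesis using ne by (simp add: deg_def)
qed

lemma max_covers:
  assumes "v \<in> X" "S \<subseteq> X" "m \<in> S" "\<forall>s\<in>S. \<not> m << s" "m << v"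
    "\<And>z. z \<in> X \<Longrightarrow> m << z \<Longrightarrow> z << v \<Longrightarrow> z \<in> S"
  shows "covers X leq m v"
  using assms unfolding covers_def by blast

lemma deg_ex: "v \<in> X \<Longrightarrow> homologically_admissible X leq \<Longrightarrow> \<exists>n. deg v n"
proof (induction "card (H v)" arbitrary: v rule: less_induct)
  case less
  show ?case
  proof (cases "H v = {}")
    case True then show ?thesis by (auto simp: deg_def)
  next
    case False
    have fin: "finite (H v)" using finX H_X finite_subset by blast
    obtain m where m: "m \<in> H v" "\<forall>s\<in>H v. \<not> m << s" using ex_max[OF fin H_X False] by blast
    have mX: "m \<in> X" "m << v" using m(1) by (auto simp: hatU_def)
    have c: "covers X leq m v"
      by (rule max_covers[OF less.prems(1) H_X m(1) m(2) mX(2)]) (auto simp: hatU_def)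
    have "card (H m) < card (H v)" using card_H_less[OF mX(1) less.prems(1) mX(2)] .
    then obtain k where "deg m k" using less.hyps mX(1) less.prems(2) by blast
    then show ?thesis using deg_step[OF less.prems(2) c] by blast
  qed
qed

lemma deg_uniq: "deg v n \<Longrightarrow> deg v m \<Longrightarrow> n = m"
  unfolding deg_def by auto

definition d :: "'a \<Rightarrow> int" where "d v = (THE n. deg v n)"

lemma d_deg: "v \<in> X \<Longrightarrow> homologically_admissible X leq \<Longrightarrow> deg v (d v)"
  unfolding d_def using deg_ex deg_uniq by (metis theI)

lemma d_cover: "homologically_admissible X leq \<Longrightarrow> covers X leq w v \<Longrightarrow> d v = d w + 1"
  using d_deg deg_step deg_uniq covers_X by metis

lemma d_mono: "v \<in> X \<Longrightarrow> u \<in> X \<Longrightarrow> u << v \<Longrightarrow> homologically_admissible X leq \<Longrightarrow> d u < d v"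
proof (induction "card (H v)" arbitrary: v rule: less_induct)
  case less
  define S where "S = {t \<in> X. leq u t \<and> t << v}"
  have SX: "S \<subseteq> X" and fin: "finite S" and uS: "u \<in> S"
    using finX less.prems refl by (auto simp: S_def finite_subset pstrict_def)
  obtain m where m: "m \<in> S" "\<forall>s\<in>S. \<not> m << s" using ex_max[OF fin SX] uS by blast
  have mX: "m \<in> X" "leq u m" "m << v" using m(1) by (auto simp: S_def)
  have c: "covers X leq m v"
  proof (rule max_covers[OF less.prems(1) SX m(1) m(2) mX(3)])
    fix z assume z: "z \<in> X" "m << z" "z << v"
    have "leq u z" using trans[OF less.prems(2) mX(1) z(1) mX(2)] z(2) by (simp add: pstrict_def)
    then show "z \<in> S" using z by (simp add: S_def)
  qed
  have dv: "d v = d m + 1" using d_cover[OF less.prems(4) c] .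
  show ?case
  proof (cases "m = u")
    case True then show ?thesis using dv by simp
  next
    case False
    then have "u << m" using mX(2) by (simp add: pstrict_def)
    moreover have "card (H m) < card (H v)" using card_H_less[OF mX(1) less.prems(1) mX(3)] .
    ultimately have "d u < d m" using less.hyps mX(1) less.prems(2,4) by blast
    then show ?thesis using dv by simp
  qed
qed


lemma bad_triple:
  assumes adm: "homologically_admissible X leq"
    and cxz: "covers X leq x z" and czy: "covers X leq z y"
    and nz: "\<And>z'. z' \<in> X \<Longrightarrow> covers X leq x z' \<Longrightarrow> covers X leq z' y \<Longrightarrow> z' = z"
  shows False
proof -
  have xz: "x \<in> X" "z \<in> X" "x << z" using covers_X[OF cxz] by auto
  have zy: "y \<in> X" "z << y" using covers_X[OF czy] by auto
  have xy: "x << y" using lt_trans[OF xz(1,2) zy(1) xz(3) zy(2)] .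
  have dz: "d z = d x + 1" using d_cover[OF adm cxz] .
  have dy: "d y = d z + 1" using d_cover[OF adm czy] .
  have mid: "u = z" if u: "u \<in> X" "x << u" "u << y" for u
  proof -
    have a: "d x < d u" "d u < d y" using d_mono[OF u(1) xz(1) u(2) adm] d_mono[OF zy(1) u(1) u(3) adm] by auto
    have c1: "covers X leq x u"
      unfolding covers_def
    proof (intro conjI xz(1) u(1) u(2) notI)
      assume "\<exists>t\<in>X. x << t \<and> t << u"
      then obtain t where t: "t \<in> X" "x << t" "t << u" by blast
      have "d x < d t" "d t < d u" using d_mono[OF t(1) xz(1) t(2) adm] d_mono[OF u(1) t(1) t(3) adm] by auto
      then show False using a dz dy by simp
    qed
    have c2: "covers X leq u y"
      unfolding covers_def
    proof (intro conjI zy(1) u(1) u(3) notI)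
      assume "\<exists>t\<in>X. u << t \<and> t << y"
      then obtain t where t: "t \<in> X" "u << t" "t << y" by blast
      have "d u < d t" "d t < d y" using d_mono[OF t(1) u(1) t(2) adm] d_mono[OF zy(1) t(1) t(3) adm] by auto
      then show False using a dz dy by simp
    qed
    show ?thesis using nz[OF u(1) c1 c2] .
  qed
  define A where "A = H y - {z}"
  define B where "B = H y - {z, x}"
  have nzy: "\<And>t. t \<in> X \<Longrightarrow> z << t \<Longrightarrow> t << y \<Longrightarrow> False" using czy by (auto simp: covers_def)
  have dA: "down A" unfolding A_def by (rule edge_sets(1)[OF czy])
  have Ane: "A \<noteq> {}" and Atr: "\<And>p. trivial_group (reduced_homology_group p (sub A))"
    unfolding A_def using edge_acyc[OF adm czy] by auto
  have AH: "A \<subseteq> H y" "B \<subseteq> H y" "B \<subseteq> A" and AX: "A \<subseteq> X"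
    unfolding A_def B_def using H_X by auto
  have dB: "down B"
    unfolding down_def
  proof (intro conjI ballI impI)
    show "B \<subseteq> X" using AH AX by blast
    fix b t assume b: "b \<in> B" and t: "t \<in> X" "leq t b"
    have bX: "b \<in> X" "b << y" "b \<noteq> z" "b \<noteq> x" using b by (auto simp: B_def hatU_def)
    have "t << y" using le_lt_trans[OF t(1) bX(1) zy(1) t(2) bX(2)] .
    moreover have "t \<noteq> z"
    proof
      assume "t = z"
      then have "z << b" using t bX by (simp add: pstrict_def)
      then show False using nzy[OF bX(1) _ bX(2)] by blast
    qed
    moreover have "t \<noteq> x"
    proof
      assume "t = x"
      then have "x << b" using t bX by (simp add: pstrict_def)
      then show False using mid[OF bX(1) _ bX(2)] bX(3) by blast
    qed
    ultimately show "t \<in> B" using t by (simp add: B_def hatU_def)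
  qed
  have Ux: "U x \<subseteq> A"
  proof
    fix u assume "u \<in> U x"
    then have u: "u \<in> X" "leq u x" by (auto simp: U_def)
    have "u << y" using le_lt_trans[OF u(1) xz(1) zy(1) u(2) xy] .
    moreover have "u \<noteq> z"
    proof
      assume "u = z"
      then have "leq z x" using u by simp
      then show False using xz lt_asym by (auto simp: pstrict_def dest: antisym)
    qed
    ultimately show "u \<in> A" using u by (simp add: A_def hatU_def)
  qed
  have BUx: "B \<union> U x = A" using Ux v_U[OF xz(1)] unfolding A_def B_def by blast
  have BIx: "B \<inter> U x = H x"
  proof
    show "B \<inter> U x \<subseteq> H x" by (auto simp: B_def U_def hatU_def pstrict_def)
    show "H x \<subseteq> B \<inter> U x"
    proof
      fix u assume "u \<in> H x"
      then have u: "u \<in> X" "u << x" by (auto simp: hatU_def)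
      have "u << z" using lt_trans[OF u(1) xz(1,2) u(2) xz(3)] .
      moreover have "u << y" using lt_trans[OF u(1) xz(1) zy(1) u(2) xy] .
      ultimately show "u \<in> B \<inter> U x" using u lt_irrefl by (auto simp: B_def U_def hatU_def pstrict_def)
    qed
  qed
  have Uz: "U z \<subseteq> H y" by (rule edge_sets(4)[OF czy])
  have xUz: "x \<in> U z" using xz by (simp add: U_def pstrict_def)
  have BUz: "B \<union> U z = H y" using Uz xUz v_U[OF xz(2)] unfolding B_def by blast
  have BIz: "B \<inter> U z = H z - {x}"
  proof
    show "B \<inter> U z \<subseteq> H z - {x}" by (auto simp: B_def U_def hatU_def pstrict_def)
    show "H z - {x} \<subseteq> B \<inter> U z"
    proof
      fix u assume "u \<in> H z - {x}"
      then have u: "u \<in> X" "u << z" "u \<noteq> x" by (auto simp: hatU_def)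
      have "u << y" using lt_trans[OF u(1) xz(2) zy(1) u(2) zy(2)] .
      then show "u \<in> B \<inter> U z" using u lt_irrefl by (auto simp: B_def U_def hatU_def pstrict_def)
    qed
  qed
  have Hz: "H z - {x} \<noteq> {}" "\<And>p. trivial_group (reduced_homology_group p (sub (H z - {x})))"
    using edge_acyc[OF adm cxz] by auto
  define n where "n = d y"
  have Hyne: "H y \<noteq> {}" using xy xz(1) by (auto simp: hatU_def)
  have nt: "\<not> trivial_group (reduced_homology_group n (sub (H y)))"
    using d_deg[OF zy(1) adm] Hyne unfolding n_def deg_def by auto
  have "trivial_group (relative_homology_group n (sub (H y)) B)"
    using K[OF down_H[OF zy(1)] dB xz(2) Uz AH(2) BUz, of n] BIz Hz by simp
  then have ntB: "\<not> trivial_group (reduced_homology_group n (sub B))"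
    using tr3[OF AH(2)] nt by blast
  show False
  proof (cases "H x = {}")
    case False
    have "\<not> trivial_group (relative_homology_group (n+1) (sub A) B)"
      using tr2[OF AH(3), of "n+1"] Atr[of n] ntB by auto
    then have "\<not> trivial_group (reduced_homology_group n (sub (H x)))"
      using K[OF dA dB xz(1) Ux AH(3) BUx, of "n+1"] BIx False by simp
    then have "n = d x" using d_deg[OF xz(1) adm] False unfolding deg_def by auto
    then show False using n_def dz dy by simp
  next
    case True
    have Bne: "B \<noteq> {}" using BIz Hz(1) by blast
    have "trivial_group (relative_homology_group 0 (sub A) B)"
      using tr1[OF Bne AH(3) AX Atr[of 0]] trivial_reduced_homology_group[of "0 - 1" "sub B"] by simp
    moreover have "\<not> trivial_group (relative_homology_group 0 (sub A) B)"
      using K0[OF dA dB xz(1) Ux AH(3) BUx] BIx True by simp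
    ultimately show False by blast
  qed
qed

end

theorem mainTheorem3:
  fixes X :: "'a set" and leq :: "'a \<Rightarrow> 'a \<Rightarrow> bool"
  assumes "finite_poset X leq"
    and "homologically_admissible X leq"
  shows "two_wide X leq"
proof -
  interpret fposet X leq using assms(1) by unfold_locales
  show ?thesis
    unfolding two_wide_def
  proof (intro ballI impI)
    fix x z y assume xzy: "x \<in> X" "z \<in> X" "y \<in> X" and c: "covers X leq x z \<and> covers X leq z y"
    show "\<exists>z'\<in>X. z' \<noteq> z \<and> covers X leq x z' \<and> covers X leq z' y"
    proof (rule ccontr)
      assume "\<not> ?thesis"
      then have "\<And>z'. z' \<in> X \<Longrightarrow> covers X leq x z' \<Longrightarrow> covers X leq z' y \<Longrightarrow> z' = z" by blast
      then show False using bad_triple[OF assms(2)] c by blast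
    qed
  qed
qed

end
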